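(* Let $(\Psi,\vec u,E)$ be a GCD-to-DIV triple in which $\Psi$ has $d$ variables, and let $p\in\mathbb P(\Psi)$. If $\Psi$ has a solution modulo $p$, then it has a solution $\vec b_p\in\mathbb Z^d$ modulo $p$ with $\|\vec b_p\|_\infty\le(d+1)\cdot\|\Psi\|_\infty^3\,p^2$.
   Context: For integers $a\mid b$ means there is a unique $q$ with $b=qa$. A system of divisibility constraints is $\Psi=\bigwedge_{i=1}^m f_i\mid g_i$ with linear integer polynomials $f_i\neq0$, $g_i$. For a prime $p$, $v_p$ is the $p$-adic valuation ($v_p(0)=\infty$); $\vec b$ is a solution of $\Psi$ modulo $p$ if $f_i(\vec b)\ne0$ and $v_p(f_i(\vec b))\le v_p(g_i(\vec b))$ for all $i$. $\mathbb P(\Psi)$ is the set of primes $p$ with $p\le m$ or $p$ dividing some coefficient or constant of some left-hand side $f_i$. $\|\Psi\|_\infty$ is the maximum absolute value of a coefficient or constant of a polynomial in $\Psi$; $\|\vec b\|_\infty$ is the maximum absolute entry. GCD-to-DIV triple: $(\Psi,\vec u,E)$ such that there are $d',m'\in\mathbb N$ and three disjoint families of variables $\vec z,\vec y,\vec w$ with: (1) $\Psi(\vec z,\vec y,\vec w)$ is a system of divisibility constraints in $m'$ variables, $\vec u\in\mathbb Z^{d'}$, $E\in\mathbb Z^{d'\times m'}$, each column of $E$ corresponding to a variable of $\Psi$; (2) each divisibility of $\Psi$ has the form $h(\vec z)\mid f(\vec y)$ or $f(\vec y)\mid g(\vec w)$ with $g$ non-constant, all polynomials have only non-negative coefficients and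 constants, and every left-hand side has a strictly positive constant; (3) each variable $z$ of $\vec z$ appears in a single polynomial of $\Psi$, which has the form $z+c$ with $c$ a positive integer and occurs in exactly two divisibilities (as left-hand side); (4) each variable $w$ of $\vec w$ appears in exactly two polynomials, of the forms $w$ and $w+c$ with $c$ a positive integer, each occurring exactly once in $\Psi$ (as right-hand sides); (5) every column of $E$ corresponding to a variable of $\vec z$ or $\vec w$ is zero. *)

theory Defs
  imports "HOL-Computational_Algebra.Primes"
begin

text \<open>A linear integer polynomial in the variables x_0,...,x_{d-1} is represented by
  the list of its d coefficients together with its constant term.\<close>
type_synonym linpoly = "int list \<times> int"

text \<open>A divisibility f | g; a system is a list of divisibilities.\<close>
type_synonym divsys = "(linpoly \<times> linpoly) list"

definition lp_eval :: "linpoly \<Rightarrow> int list \<Rightarrow> int" where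
  "lp_eval f b = (\<Sum>i<length (fst f). fst f ! i * b ! i) + snd f"

definition lp_vars :: "linpoly \<Rightarrow> nat set" where
  "lp_vars f = {i. i < length (fst f) \<and> fst f ! i \<noteq> 0}"

definition lp_zero :: "linpoly \<Rightarrow> bool" where
  "lp_zero f \<longleftrightarrow> lp_vars f = {} \<and> snd f = 0"

definition lp_var_plus :: "nat \<Rightarrow> nat \<Rightarrow> int \<Rightarrow> linpoly" where
  "lp_var_plus d j c = (map (\<lambda>i. if i = j then 1 else 0) [0..<d], c)"

definition polys_of :: "divsys \<Rightarrow> linpoly list" where
  "polys_of \<Psi> = concat (map (\<lambda>(f,g). [f,g]) \<Psi>)"

definition is_divsys :: "nat \<Rightarrow> divsys \<Rightarrow> bool" where
  "is_divsys d \<Psi> \<longleftrightarrow>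
     (\<forall>(f,g)\<in>set \<Psi>. length (fst f) = d \<and> length (fst g) = d \<and> \<not> lp_zero f)"

text \<open>p-adic valuation condition with v_p(0) = infinity.\<close>
definition vp_le :: "nat \<Rightarrow> int \<Rightarrow> int \<Rightarrow> bool" where
  "vp_le p x y \<longleftrightarrow> y = 0 \<or> (x \<noteq> 0 \<and> multiplicity (int p) x \<le> multiplicity (int p) y)"

definition sol_mod :: "nat \<Rightarrow> divsys \<Rightarrow> int list \<Rightarrow> bool" where
  "sol_mod p \<Psi> b \<longleftrightarrow>
     (\<forall>(f,g)\<in>set \<Psi>. lp_eval f b \<noteq> 0 \<and> vp_le p (lp_eval f b) (lp_eval g b))"

definition primes_of :: "divsys \<Rightarrow> nat set" where
  "primes_of \<Psi> = {p. prime p \<and>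
     (p \<le> length \<Psi> \<or>
      (\<exists>(f,g)\<in>set \<Psi>. \<exists>a\<in>set (fst f) \<union> {snd f}. a \<noteq> 0 \<and> int p dvd a))}"

definition lp_norm :: "linpoly \<Rightarrow> int" where
  "lp_norm f = Max (abs ` (set (fst f) \<union> {snd f}))"

definition sys_norm :: "divsys \<Rightarrow> int" where
  "sys_norm \<Psi> = Max ({0} \<union> lp_norm ` set (polys_of \<Psi>))"

definition vec_norm :: "int list \<Rightarrow> int" where
  "vec_norm b = Max ({0} \<union> abs ` set b)"

definition lp_nonneg :: "linpoly \<Rightarrow> bool" where
  "lp_nonneg f \<longleftrightarrow> (\<forall>a\<in>set (fst f). a \<ge> 0) \<and> snd f \<ge> 0"

text \<open>GCD-to-DIV triple (Psi, u, E) where Psi has d variables (m' = d), u has d' entries,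
  E is a d' x d matrix given as a list of d' rows of length d. Z, Y, W are the index
  sets of the variable families z, y, w.\<close>
definition gcd_to_div_triple :: "nat \<Rightarrow> divsys \<Rightarrow> int list \<Rightarrow> int list list \<Rightarrow> bool" where
  "gcd_to_div_triple d \<Psi> u E \<longleftrightarrow>
   (\<exists>Z Y W.
     \<comment> \<open>(1)\<close>
     Z \<inter> Y = {} \<and> Z \<inter> W = {} \<and> Y \<inter> W = {} \<and> Z \<union> Y \<union> W = {..<d} \<and>
     is_divsys d \<Psi> \<and> length E = length u \<and> (\<forall>r\<in>set E. length r = d) \<and>
     \<comment> \<open>(2)\<close>
     (\<forall>(f,g)\<in>set \<Psi>.
        (lp_vars f \<subseteq> Z \<and> lp_vars g \<subseteq> Y) \<or>
        (lp_vars f \<subseteq> Y \<and> lp_vars g \<subseteq> W \<and> lp_vars g \<noteq> {})) \<and>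
     (\<forall>h\<in>set (polys_of \<Psi>). lp_nonneg h) \<and>
     (\<forall>(f,g)\<in>set \<Psi>. snd f > 0) \<and>
     \<comment> \<open>(3)\<close>
     (\<forall>z\<in>Z. \<exists>c>0.
        {h\<in>set (polys_of \<Psi>). z \<in> lp_vars h} = {lp_var_plus d z c} \<and>
        length (filter (\<lambda>(f,g). f = lp_var_plus d z c) \<Psi>) = 2 \<and>
        (\<forall>(f,g)\<in>set \<Psi>. g \<noteq> lp_var_plus d z c)) \<and>
     \<comment> \<open>(4)\<close>
     (\<forall>w\<in>W. \<exists>c>0.
        {h\<in>set (polys_of \<Psi>). w \<in> lp_vars h} = {lp_var_plus d w 0, lp_var_plus d w c} \<and>
        length (filter (\<lambda>h. h = lp_var_plus d w 0) (polys_of \<Psi>)) = 1 \<and>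
        length (filter (\<lambda>h. h = lp_var_plus d w c) (polys_of \<Psi>)) = 1 \<and>
        (\<forall>(f,g)\<in>set \<Psi>. f \<noteq> lp_var_plus d w 0 \<and> f \<noteq> lp_var_plus d w c)) \<and>
     \<comment> \<open>(5)\<close>
     (\<forall>r\<in>set E. \<forall>j\<in>Z \<union> W. r ! j = 0))"

end

theory Submission
  imports Defs
begin


lemma vp_le_iff:
  assumes "prime (p::nat)" "x \<noteq> 0"
  shows "vp_le p x y \<longleftrightarrow> int p ^ multiplicity (int p) x dvd y"
proof (cases "y = 0")
  case True then show ?thesis by (simp add: vp_le_def)
next
  case False
  have nu: "\<not> is_unit (int p)" using assms(1)
    using prime_gt_1_nat[of p] by simp
  show ?thesis using False assms(2)
    power_dvd_iff_le_multiplicity[OF False nu] by (auto simp: vp_le_def)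
qed

lemma dvd_transfer:
  fixes P x x' :: int
  assumes "k \<le> N" "P ^ N dvd (x - x')" "P ^ k dvd x"
  shows "P ^ k dvd x'"
proof -
  have "P ^ k dvd P ^ N" using assms(1) by (simp add: le_imp_power_dvd)
  then have "P ^ k dvd (x - x')" using assms(2) dvd_trans by blast
  then have "P ^ k dvd x - (x - x')" using assms(3) dvd_diff by blast
  then show ?thesis by simp
qed

lemma mult_stable:
  assumes p: "prime (p::nat)" and x: "x \<noteq> 0" and lt: "multiplicity (int p) x < N"
    and d: "int p ^ N dvd (x - x')"
  shows "x' \<noteq> 0 \<and> multiplicity (int p) x' = multiplicity (int p) x"
proof -
  let ?P = "int p" let ?e = "multiplicity ?P x"
  have nu: "\<not> is_unit ?P" using p using prime_gt_1_nat[of p] by simp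
  have d2: "?P ^ N dvd (x' - x)" using d by (metis dvd_minus_iff minus_diff_eq)
  have e1: "?P ^ ?e dvd x'" using dvd_transfer[OF _ d multiplicity_dvd] lt by simp
  have ne: "\<not> ?P ^ Suc ?e dvd x" using power_dvd_iff_le_multiplicity[OF x nu, of "Suc ?e"] by linarith
  have x'0: "x' \<noteq> 0"
  proof
    assume "x' = 0"
    then have "?P ^ Suc ?e dvd x" using dvd_transfer[OF _ d2, of "Suc ?e"] lt by simp
    with ne show False by simp
  qed
  have "\<not> ?P ^ Suc ?e dvd x'"
  proof
    assume "?P ^ Suc ?e dvd x'"
    then have "?P ^ Suc ?e dvd x" using dvd_transfer[OF _ d2, of "Suc ?e"] lt by simp
    with ne show False by simp
  qed
  then have "multiplicity ?P x' = ?e" using multiplicity_eqI[OF e1] by simp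
  with x'0 show ?thesis by simp
qed

lemma lp_eval_dvd:
  assumes "length (fst f) \<le> length b" "length (fst f) \<le> length b'"
    and "\<forall>i\<in>lp_vars f. M dvd (b ! i - b' ! i)"
  shows "M dvd (lp_eval f b - lp_eval f b')"
proof -
  have "lp_eval f b - lp_eval f b' = (\<Sum>i<length (fst f). fst f ! i * (b ! i - b' ! i))"
    by (simp add: lp_eval_def sum_subtractf[symmetric] algebra_simps)
  also have "M dvd \<dots>"
  proof (rule dvd_sum)
    fix i assume "i \<in> {..<length (fst f)}"
    then show "M dvd fst f ! i * (b ! i - b' ! i)"
      using assms(3) by (cases "fst f ! i = 0") (auto simp: lp_vars_def)
  qed
  finally show ?thesis .
qed

lemma lp_eval_eq:
  assumes "\<forall>i\<in>lp_vars f. b ! i = b' ! i"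
  shows "lp_eval f b = lp_eval f b'"
proof -
  have "(\<Sum>i<length (fst f). fst f ! i * b ! i) = (\<Sum>i<length (fst f). fst f ! i * b' ! i)"
    by (rule sum.cong) (use assms in \<open>auto simp: lp_vars_def\<close>)
  then show ?thesis by (simp add: lp_eval_def)
qed

lemma lp_eval_var_plus:
  assumes "j < d"
  shows "lp_eval (lp_var_plus d j c) b = b ! j + c"
proof -
  have "(\<Sum>i<d. map (\<lambda>i. if i = j then 1 else 0) [0..<d] ! i * b ! i) = (\<Sum>i<d. if i = j then b ! j else 0)"
    by (rule sum.cong) auto
  also have "\<dots> = b ! j" using assms by simp
  finally show ?thesis by (simp add: lp_eval_def lp_var_plus_def)
qed

lemma lp_eval_nonneg:
  assumes "lp_nonneg f" "\<forall>i\<in>lp_vars f. b ! i \<ge> 0"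
  shows "lp_eval f b \<ge> snd f"
proof -
  have "(\<Sum>i<length (fst f). fst f ! i * b ! i) \<ge> 0"
  proof (rule sum_nonneg)
    fix i assume i: "i \<in> {..<length (fst f)}"
    then have "fst f ! i \<ge> 0" using assms(1) by (auto simp: lp_nonneg_def)
    then show "fst f ! i * b ! i \<ge> 0" using assms(2) i
      by (cases "fst f ! i = 0") (auto simp: lp_vars_def)
  qed
  then show ?thesis by (simp add: lp_eval_def)
qed

lemma lp_vars_var_plus: "j < d \<Longrightarrow> lp_vars (lp_var_plus d j c) = {j}"
  by (auto simp: lp_vars_def lp_var_plus_def split: if_splits)


lemma small_mult:
  fixes P x :: int
  assumes "1 < P" "0 < x" "x < P ^ N"
  shows "multiplicity P x < N"
proof -
  have "P ^ multiplicity P x dvd x" by (rule multiplicity_dvd)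
  then have "P ^ multiplicity P x \<le> x" using assms(2) by (simp add: zdvd_imp_le)
  then have "P ^ multiplicity P x < P ^ N" using assms(3) by simp
  then show ?thesis using assms(1) power_strict_increasing_iff by blast
qed

lemma pow_between:
  fixes P S :: int
  assumes "1 < P" "1 \<le> S"
  shows "\<exists>N. S < P ^ N \<and> P ^ N \<le> P * S"
proof -
  have "nat S < 2 ^ nat S" by (rule less_exp)
  then have "int (nat S) < int (2 ^ nat S)" by (simp only: of_nat_less_iff)
  then have "S < 2 ^ nat S" using assms(2) by simp
  also have "(2::int) ^ nat S \<le> P ^ nat S" using assms(1) by (intro power_mono) auto
  finally have ex: "S < P ^ nat S" .
  define N where "N = (LEAST n. S < P ^ n)"
  have N1: "S < P ^ N" unfolding N_def by (rule LeastI[of _ "nat S"]) (rule ex)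
  have N0: "N \<noteq> 0"
  proof
    assume "N = 0"
    then have "S < 1" using N1 by simp
    then show False using assms(2) by simp
  qed
  then obtain k where k: "N = Suc k" by (cases N) auto
  have "k < N" using k by simp
  then have "\<not> S < P ^ k" using not_less_Least[of k "\<lambda>n. S < P ^ n"] unfolding N_def by blast
  then have "P ^ k \<le> S" by simp
  then have "P * P ^ k \<le> P * S" using assms(1) by simp
  then show ?thesis using N1 k by (intro exI[of _ "Suc k"]) simp
qed

lemma polys_mem: "(f, g) \<in> set \<Psi> \<Longrightarrow> f \<in> set (polys_of \<Psi>) \<and> g \<in> set (polys_of \<Psi>)"
proof -
  assume a: "(f, g) \<in> set \<Psi>"
  have "[f,g] \<in> set (map (\<lambda>(f,g). [f,g]) \<Psi>)" using a by force
  then have m: "[f,g] \<in> set (map (\<lambda>(f,g). [f,g]) \<Psi>)" .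
  have "f \<in> \<Union>(set ` set (map (\<lambda>(f,g). [f,g]) \<Psi>))" by (rule UN_I[OF m]) simp
  moreover have "g \<in> \<Union>(set ` set (map (\<lambda>(f,g). [f,g]) \<Psi>))" by (rule UN_I[OF m]) simp
  ultimately show ?thesis by (simp only: polys_of_def set_concat)
qed

lemma norm_snd: "h \<in> set (polys_of \<Psi>) \<Longrightarrow> \<bar>snd h\<bar> \<le> sys_norm \<Psi>"
proof -
  assume h: "h \<in> set (polys_of \<Psi>)"
  have "\<bar>snd h\<bar> \<le> lp_norm h" unfolding lp_norm_def by (rule Max_ge) auto
  also have "lp_norm h \<le> sys_norm \<Psi>" unfolding sys_norm_def by (rule Max_ge) (use h in auto)
  finally show ?thesis .
qed

lemma vec_norm_le: "B \<ge> 0 \<Longrightarrow> (\<forall>x\<in>set b. \<bar>x\<bar> \<le> B) \<Longrightarrow> vec_norm b \<le> B"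
  unfolding vec_norm_def by (subst Max_le_iff) auto

theorem mainTheorem17:
  fixes d :: nat and \<Psi> :: divsys and u :: "int list" and E :: "int list list" and p :: nat
  assumes "gcd_to_div_triple d \<Psi> u E"
    and "p \<in> primes_of \<Psi>"
    and "\<exists>b. length b = d \<and> sol_mod p \<Psi> b"
  shows "\<exists>b. length b = d \<and> sol_mod p \<Psi> b \<and>
           vec_norm b \<le> (int d + 1) * sys_norm \<Psi> ^ 3 * int p ^ 2"
proof -
  from assms(1) obtain Z Y W where H: "(Z \<inter> Y = {}) \<and>
     (Z \<inter> W = {}) \<and>
     (Y \<inter> W = {}) \<and>
     (Z \<union> Y \<union> W = {..<d}) \<and>
     (is_divsys d \<Psi>) \<and>
     (\<forall>(f,g)\<in>set \<Psi>.
        (lp_vars f \<subseteq> Z \<and> lp_vars g \<subseteq> Y) \<or>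
        (lp_vars f \<subseteq> Y \<and> lp_vars g \<subseteq> W \<and> lp_vars g \<noteq> {})) \<and>
     (\<forall>h\<in>set (polys_of \<Psi>). lp_nonneg h) \<and>
     (\<forall>(f,g)\<in>set \<Psi>. snd f > 0) \<and>
     (\<forall>z\<in>Z. \<exists>c>0.
        {h\<in>set (polys_of \<Psi>). z \<in> lp_vars h} = {lp_var_plus d z c} \<and>
        length (filter (\<lambda>(f,g). f = lp_var_plus d z c) \<Psi>) = 2 \<and>
        (\<forall>(f,g)\<in>set \<Psi>. g \<noteq> lp_var_plus d z c)) \<and>
     (\<forall>w\<in>W. \<exists>c>0.
        {h\<in>set (polys_of \<Psi>). w \<in> lp_vars h} = {lp_var_plus d w 0, lp_var_plus d w c} \<and>
        length (filter (\<lambda>h. h = lp_var_plus d w 0) (polys_of \<Psi>)) = 1 \<and>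
        length (filter (\<lambda>h. h = lp_var_plus d w c) (polys_of \<Psi>)) = 1 \<and>
        (\<forall>(f,g)\<in>set \<Psi>. f \<noteq> lp_var_plus d w 0 \<and> f \<noteq> lp_var_plus d w c))"
    unfolding gcd_to_div_triple_def by (elim exE) iprover
  have
    disj: "Z \<inter> Y = {}" "Z \<inter> W = {}" "Y \<inter> W = {}" and cov: "Z \<union> Y \<union> W = {..<d}" and
    ds: "is_divsys d \<Psi>" and
    ty: "\<forall>(f,g)\<in>set \<Psi>.
        (lp_vars f \<subseteq> Z \<and> lp_vars g \<subseteq> Y) \<or>
        (lp_vars f \<subseteq> Y \<and> lp_vars g \<subseteq> W \<and> lp_vars g \<noteq> {})" and
    nn: "\<forall>h\<in>set (polys_of \<Psi>). lp_nonneg h" and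
    pos: "\<forall>(f,g)\<in>set \<Psi>. snd f > 0" and
    c3: "\<forall>z\<in>Z. \<exists>c>0.
        {h\<in>set (polys_of \<Psi>). z \<in> lp_vars h} = {lp_var_plus d z c} \<and>
        length (filter (\<lambda>(f,g). f = lp_var_plus d z c) \<Psi>) = 2 \<and>
        (\<forall>(f,g)\<in>set \<Psi>. g \<noteq> lp_var_plus d z c)" and
    c4: "\<forall>w\<in>W. \<exists>c>0.
        {h\<in>set (polys_of \<Psi>). w \<in> lp_vars h} = {lp_var_plus d w 0, lp_var_plus d w c} \<and>
        length (filter (\<lambda>h. h = lp_var_plus d w 0) (polys_of \<Psi>)) = 1 \<and>
        length (filter (\<lambda>h. h = lp_var_plus d w c) (polys_of \<Psi>)) = 1 \<and>
        (\<forall>(f,g)\<in>set \<Psi>. f \<noteq> lp_var_plus d w 0 \<and> f \<noteq> lp_var_plus d w c)"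
    using H by simp_all
  obtain cZ where cZ0: "\<forall>z\<in>Z. cZ z > 0 \<and>
        {h\<in>set (polys_of \<Psi>). z \<in> lp_vars h} = {lp_var_plus d z (cZ z)} \<and>
        length (filter (\<lambda>(f,g). f = lp_var_plus d z (cZ z)) \<Psi>) = 2 \<and>
        (\<forall>(f,g)\<in>set \<Psi>. g \<noteq> lp_var_plus d z (cZ z))"
    using bchoice[OF c3] by (elim exE) iprover
  have cZ: "\<And>z. z \<in> Z \<Longrightarrow> cZ z > 0 \<and>
        {h\<in>set (polys_of \<Psi>). z \<in> lp_vars h} = {lp_var_plus d z (cZ z)}"
  proof -
    fix z assume z: "z \<in> Z"
    have "cZ z > 0 \<and>
        {h\<in>set (polys_of \<Psi>). z \<in> lp_vars h} = {lp_var_plus d z (cZ z)} \<and>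
        length (filter (\<lambda>(f,g). f = lp_var_plus d z (cZ z)) \<Psi>) = 2 \<and>
        (\<forall>(f,g)\<in>set \<Psi>. g \<noteq> lp_var_plus d z (cZ z))" using cZ0 z by (rule bspec)
    then show "cZ z > 0 \<and>
        {h\<in>set (polys_of \<Psi>). z \<in> lp_vars h} = {lp_var_plus d z (cZ z)}"
      by (elim conjE) (intro conjI)
  qed
  obtain cW where cW0: "\<forall>w\<in>W. cW w > 0 \<and>
        {h\<in>set (polys_of \<Psi>). w \<in> lp_vars h} = {lp_var_plus d w 0, lp_var_plus d w (cW w)} \<and>
        length (filter (\<lambda>h. h = lp_var_plus d w 0) (polys_of \<Psi>)) = 1 \<and>
        length (filter (\<lambda>h. h = lp_var_plus d w (cW w)) (polys_of \<Psi>)) = 1 \<and>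
        (\<forall>(f,g)\<in>set \<Psi>. f \<noteq> lp_var_plus d w 0 \<and> f \<noteq> lp_var_plus d w (cW w))"
    using bchoice[OF c4] by (elim exE) iprover
  have cW: "\<And>w. w \<in> W \<Longrightarrow> cW w > 0 \<and>
        {h\<in>set (polys_of \<Psi>). w \<in> lp_vars h} = {lp_var_plus d w 0, lp_var_plus d w (cW w)}"
  proof -
    fix w assume w: "w \<in> W"
    have "cW w > 0 \<and>
        {h\<in>set (polys_of \<Psi>). w \<in> lp_vars h} = {lp_var_plus d w 0, lp_var_plus d w (cW w)} \<and>
        length (filter (\<lambda>h. h = lp_var_plus d w 0) (polys_of \<Psi>)) = 1 \<and>
        length (filter (\<lambda>h. h = lp_var_plus d w (cW w)) (polys_of \<Psi>)) = 1 \<and>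
        (\<forall>(f,g)\<in>set \<Psi>. f \<noteq> lp_var_plus d w 0 \<and> f \<noteq> lp_var_plus d w (cW w))"
      using cW0 w by (rule bspec)
    then show "cW w > 0 \<and>
        {h\<in>set (polys_of \<Psi>). w \<in> lp_vars h} = {lp_var_plus d w 0, lp_var_plus d w (cW w)}"
      by (elim conjE) (intro conjI)
  qed
  from assms(3) obtain b where lb: "length b = d" and sb: "sol_mod p \<Psi> b" by blast
  have pr: "prime p" using assms(2) by (simp add: primes_of_def)
  define P where "P = int p"
  have P1: "1 < P" using pr prime_gt_1_nat P_def by simp
  define S where "S = sys_norm \<Psi>"
  have ty': "\<And>f g. (f,g) \<in> set \<Psi> \<Longrightarrow> (lp_vars f \<subseteq> Z \<and> lp_vars g \<subseteq> Y) \<or>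
        (lp_vars f \<subseteq> Y \<and> lp_vars g \<subseteq> W \<and> lp_vars g \<noteq> {})" using ty by blast
  have pos': "\<And>f g. (f,g) \<in> set \<Psi> \<Longrightarrow> snd f > 0" using pos by blast
  have sb': "\<And>f g. (f,g) \<in> set \<Psi> \<Longrightarrow> lp_eval f b \<noteq> 0 \<and>
       P ^ multiplicity P (lp_eval f b) dvd lp_eval g b"
    using sb vp_le_iff[OF pr] unfolding sol_mod_def P_def by blast
  have lens: "\<And>f g. (f,g) \<in> set \<Psi> \<Longrightarrow> length (fst f) = d \<and> length (fst g) = d"
    using ds unfolding is_divsys_def by blast
  have "\<Psi> \<noteq> []"
  proof
    assume "\<Psi> = []"
    then show False using assms(2) pr prime_gt_1_nat[of p] by (auto simp: primes_of_def)
  qed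
  then obtain f0 g0 where fg0: "(f0, g0) \<in> set \<Psi>" by (metis list.set_sel(1) surj_pair)
  have S1: "1 \<le> S" using pos'[OF fg0] norm_snd[of f0 \<Psi>] polys_mem[OF fg0] unfolding S_def by linarith
  obtain N where N1: "S < P ^ N" and N2: "P ^ N \<le> P * S" using pow_between[OF P1 S1] by blast
  define M where "M = P ^ N"
  have M0: "M > 0" using P1 M_def by simp
  define bY where "bY = map (\<lambda>i. b ! i mod M) [0..<d]"
  define Q where "Q = (\<lambda>w. \<forall>(f,g)\<in>set \<Psi>. g = lp_var_plus d w (cW w) \<longrightarrow>
       P ^ multiplicity P (lp_eval f bY) dvd cW w)"
  define b' where "b' = map (\<lambda>i. if i \<in> Z then 1 - cZ i else if i \<in> Y then b ! i mod M
      else if Q i then 0 else - cW i) [0..<d]"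
  have lb': "length b' = d" by (simp add: b'_def)
  have lbY: "length bY = d" by (simp add: bY_def)
  have Zd: "\<And>i. i \<in> Z \<Longrightarrow> i < d" "\<And>i. i \<in> Y \<Longrightarrow> i < d" "\<And>i. i \<in> W \<Longrightarrow> i < d"
    using cov by blast+
  have b'Z: "\<And>i. i \<in> Z \<Longrightarrow> b' ! i = 1 - cZ i"
  proof -
    fix i assume i: "i \<in> Z"
    then have "i < d" by (rule Zd)
    then show "b' ! i = 1 - cZ i" using i by (simp add: b'_def)
  qed
  have b'Y: "\<And>i. i \<in> Y \<Longrightarrow> b' ! i = bY ! i"
  proof -
    fix i assume i: "i \<in> Y"
    then have "i < d" by (rule Zd)
    moreover have "i \<notin> Z" using i disj(1) by blast
    ultimately show "b' ! i = bY ! i" using i by (simp add: b'_def bY_def)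
  qed
  have b'W: "\<And>i. i \<in> W \<Longrightarrow> b' ! i = (if Q i then 0 else - cW i)"
  proof -
    fix i assume i: "i \<in> W"
    then have "i < d" by (rule Zd)
    moreover have "i \<notin> Z" using i disj(2) by blast
    moreover have "i \<notin> Y" using i disj(3) by blast
    ultimately show "b' ! i = (if Q i then 0 else - cW i)" by (simp add: b'_def)
  qed
  have bYd: "\<And>i. i < d \<Longrightarrow> M dvd (b ! i - bY ! i)"
  proof -
    fix i assume "i < d"
    then have "bY ! i = b ! i mod M" by (simp add: bY_def)
    then show "M dvd (b ! i - bY ! i)" by (simp add: mod_eq_dvd_iff[symmetric])
  qed
  have bYpos: "\<And>i. i < d \<Longrightarrow> bY ! i \<ge> 0" using M0 by (simp add: bY_def)
  have evY: "\<And>f. lp_vars f \<subseteq> Y \<Longrightarrow> lp_eval f b' = lp_eval f bY"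
    by (rule lp_eval_eq) (use b'Y in auto)
  have dvY: "\<And>f g. (f,g) \<in> set \<Psi> \<Longrightarrow> lp_vars f \<subseteq> Y \<Longrightarrow> M dvd (lp_eval f b - lp_eval f bY)"
    by (rule lp_eval_dvd) (use lens lb lbY bYd Zd in auto)
  have dvYg: "\<And>f g. (f,g) \<in> set \<Psi> \<Longrightarrow> lp_vars g \<subseteq> Y \<Longrightarrow> M dvd (lp_eval g b - lp_eval g bY)"
    by (rule lp_eval_dvd) (use lens lb lbY bYd Zd in auto)
  have cWS: "\<And>w. w \<in> W \<Longrightarrow> cW w \<le> S"
  proof -
    fix w assume w: "w \<in> W"
    have "lp_var_plus d w (cW w) \<in> set (polys_of \<Psi>)" using cW[OF w] by blast
    then show "cW w \<le> S" using norm_snd unfolding S_def by (fastforce simp: lp_var_plus_def)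
  qed
  have cZS: "\<And>z. z \<in> Z \<Longrightarrow> cZ z \<le> S"
  proof -
    fix w assume w: "w \<in> Z"
    have "lp_var_plus d w (cZ w) \<in> set (polys_of \<Psi>)" using cZ[OF w] by blast
    then show "cZ w \<le> S" using norm_snd unfolding S_def by (fastforce simp: lp_var_plus_def)
  qed
  have multc: "\<And>c. 0 < c \<Longrightarrow> c \<le> S \<Longrightarrow> multiplicity P c < N"
    using small_mult[OF P1] N1 by fastforce
  have gW: "\<And>f g w. (f,g) \<in> set \<Psi> \<Longrightarrow> w \<in> lp_vars g \<Longrightarrow> w \<in> W \<Longrightarrow> lp_vars f \<subseteq> Y"
    using ty' disj by blast
  have K: "\<And>f1 g1 f2 g2 w. w \<in> W \<Longrightarrow> (f1,g1) \<in> set \<Psi> \<Longrightarrow> (f2,g2) \<in> set \<Psi> \<Longrightarrow>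
     g1 = lp_var_plus d w 0 \<Longrightarrow> g2 = lp_var_plus d w (cW w) \<Longrightarrow>
     P ^ multiplicity P (lp_eval f1 bY) dvd cW w \<or> P ^ multiplicity P (lp_eval f2 bY) dvd cW w"
  proof -
    fix f1 g1 f2 g2 w assume w: "w \<in> W" and m1: "(f1,g1) \<in> set \<Psi>" and m2: "(f2,g2) \<in> set \<Psi>"
      and g1: "g1 = lp_var_plus d w 0" and g2: "g2 = lp_var_plus d w (cW w)"
    have wd: "w < d" using Zd w by auto
    have y1: "lp_vars f1 \<subseteq> Y" using gW[OF m1 _ w] g1 lp_vars_var_plus[OF wd] by auto
    have y2: "lp_vars f2 \<subseteq> Y" using gW[OF m2 _ w] g2 lp_vars_var_plus[OF wd] by auto
    define e1 where "e1 = multiplicity P (lp_eval f1 b)"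
    define e2 where "e2 = multiplicity P (lp_eval f2 b)"
    have d1: "P ^ e1 dvd b ! w" using sb'[OF m1] g1 lp_eval_var_plus[OF wd] e1_def by simp
    have d2: "P ^ e2 dvd b ! w + cW w" using sb'[OF m2] g2 lp_eval_var_plus[OF wd] e2_def by simp
    have cpos: "0 < cW w" "cW w \<le> S" using cW[OF w] cWS[OF w] by auto
    show "P ^ multiplicity P (lp_eval f1 bY) dvd cW w \<or> P ^ multiplicity P (lp_eval f2 bY) dvd cW w"
    proof (cases "e1 \<le> e2")
      case True
      then have "P ^ e1 dvd b ! w + cW w" using d2 le_imp_power_dvd dvd_trans by blast
      then have c: "P ^ e1 dvd cW w" using d1 by (metis add_diff_cancel_left' dvd_diff)
      then have "e1 \<le> multiplicity P (cW w)" using power_dvd_iff_le_multiplicity[of "cW w" P] cpos P1 by auto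
      then have "e1 < N" using multc[OF cpos] by linarith
      then have "multiplicity P (lp_eval f1 bY) = e1"
        using mult_stable[OF pr _ _ dvY[OF m1 y1, unfolded M_def P_def]] sb'[OF m1] e1_def P_def by auto
      then show ?thesis using c by simp
    next
      case False
      then have "P ^ e2 dvd b ! w" using d1 le_imp_power_dvd dvd_trans by (meson nat_le_linear)
      then have c: "P ^ e2 dvd cW w" using d2 by (metis add_diff_cancel_left' dvd_diff)
      then have "e2 \<le> multiplicity P (cW w)" using power_dvd_iff_le_multiplicity[of "cW w" P] cpos P1 by auto
      then have "e2 < N" using multc[OF cpos] by linarith
      then have "multiplicity P (lp_eval f2 bY) = e2"
        using mult_stable[OF pr _ _ dvY[OF m2 y2, unfolded M_def P_def]] sb'[OF m2] e2_def P_def by auto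
      then show ?thesis using c by simp
    qed
  qed
  have sol: "sol_mod p \<Psi> b'"
    unfolding sol_mod_def
  proof (intro ballI, clarify)
    fix f g assume m: "(f, g) \<in> set \<Psi>"
    show "lp_eval f b' \<noteq> 0 \<and> vp_le p (lp_eval f b') (lp_eval g b')"
    proof (cases "lp_vars f \<subseteq> Z \<and> lp_vars g \<subseteq> Y")
      case A: True
      show ?thesis
      proof (cases "lp_vars f = {}")
        case True
        have e: "lp_eval f b' = lp_eval f b" by (rule lp_eval_eq) (use True in auto)
        have "(\<Sum>i<length (fst f). fst f ! i * b ! i) = 0"
          by (rule sum.neutral) (use True in \<open>auto simp: lp_vars_def\<close>)
        then have e2: "lp_eval f b = snd f" by (simp add: lp_eval_def)
        have fS: "snd f \<le> S" using norm_snd[of f \<Psi>] polys_mem[OF m] S_def by auto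
        have lt: "multiplicity P (lp_eval f b) < N" using multc pos'[OF m] fS e2 by simp
        have "P ^ multiplicity P (lp_eval f b) dvd lp_eval g b'"
          using dvd_transfer[of _ N P "lp_eval g b" "lp_eval g bY"] lt sb'[OF m] dvYg[OF m] A evY[of g] M_def
          by auto
        then show ?thesis using e sb'[OF m] vp_le_iff[OF pr] P_def by simp
      next
        case False
        then obtain z where z: "z \<in> lp_vars f" by blast
        have zZ: "z \<in> Z" using z A by auto
        have "f \<in> {h\<in>set (polys_of \<Psi>). z \<in> lp_vars h}" using z polys_mem[OF m] by auto
        then have f: "f = lp_var_plus d z (cZ z)" using cZ[OF zZ] by blast
        have "lp_eval f b' = 1" using f lp_eval_var_plus[OF Zd(1)[OF zZ]] b'Z[OF zZ] by simp
        then show ?thesis using vp_le_iff[OF pr] by simp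
      qed
    next
      case False
      then have B: "lp_vars f \<subseteq> Y" "lp_vars g \<subseteq> W" "lp_vars g \<noteq> {}" using ty'[OF m] by auto
      then obtain w where wg: "w \<in> lp_vars g" by blast
      have wW: "w \<in> W" using wg B by auto
      have wd: "w < d" using Zd wW by auto
      have fpos: "lp_eval f b' > 0"
      proof -
        have "lp_eval f bY \<ge> snd f"
          by (rule lp_eval_nonneg) (use nn polys_mem[OF m] bYpos lens[OF m] in \<open>auto simp: lp_vars_def\<close>)
        then show ?thesis using pos'[OF m] evY[OF B(1)] by simp
      qed
      have "g \<in> {h\<in>set (polys_of \<Psi>). w \<in> lp_vars h}" using wg polys_mem[OF m] by auto
      then have g: "g = lp_var_plus d w 0 \<or> g = lp_var_plus d w (cW w)" using cW[OF wW] by blast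
      have vp: "vp_le p (lp_eval f b') (lp_eval g b')"
      proof (cases "g = lp_var_plus d w 0")
        case True
        have gv: "lp_eval g b' = b' ! w" using True lp_eval_var_plus[OF wd] by simp
        show ?thesis
        proof (cases "Q w")
          case True then show ?thesis using gv b'W[OF wW] by (simp add: vp_le_def)
        next
          case False
          then obtain f2 g2 where m2: "(f2,g2) \<in> set \<Psi>" and g2: "g2 = lp_var_plus d w (cW w)"
            and nd: "\<not> P ^ multiplicity P (lp_eval f2 bY) dvd cW w" unfolding Q_def by blast
          have "P ^ multiplicity P (lp_eval f bY) dvd cW w" using K[OF wW m m2 True g2] nd by blast
          then have "P ^ multiplicity P (lp_eval f b') dvd lp_eval g b'"
            using gv b'W[OF wW] False evY[OF B(1)] by simp
          then show ?thesis using vp_le_iff[OF pr] fpos P_def by simp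
        qed
      next
        case False
        then have g2: "g = lp_var_plus d w (cW w)" using g by blast
        have gv: "lp_eval g b' = b' ! w + cW w" using g2 lp_eval_var_plus[OF wd] by simp
        show ?thesis
        proof (cases "Q w")
          case True
          then have "P ^ multiplicity P (lp_eval f bY) dvd cW w" using m g2 unfolding Q_def by blast
          then have "P ^ multiplicity P (lp_eval f b') dvd lp_eval g b'"
            using gv b'W[OF wW] True evY[OF B(1)] by simp
          then show ?thesis using vp_le_iff[OF pr] fpos P_def by simp
        next
          case False then show ?thesis using gv b'W[OF wW] by (simp add: vp_le_def)
        qed
      qed
      show ?thesis using fpos vp by simp
    qed
  qed
  have pS: "P * S \<le> (int d + 1) * S ^ 3 * P ^ 2"
  proof -
    have "P * S \<le> P ^ 2 * S ^ 3"
    proof (rule mult_mono)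
      show "P \<le> P ^ 2" using P1 by (simp add: power2_eq_square)
      show "S \<le> S ^ 3" using S1 by (simp add: power3_eq_cube) (metis mult_le_cancel_left1 mult_left_mono one_le_mult_iff S1 order_trans zero_le_one mult_1_right)
    qed (use P1 S1 in auto)
    also have "\<dots> \<le> (int d + 1) * (P ^ 2 * S ^ 3)" using P1 S1 by simp
    finally show ?thesis by (simp add: algebra_simps)
  qed
  have nb: "vec_norm b' \<le> P * S"
  proof (rule vec_norm_le)
    show "0 \<le> P * S" using P1 S1 by simp
    show "\<forall>x\<in>set b'. \<bar>x\<bar> \<le> P * S"
    proof
      fix x assume "x \<in> set b'"
      then obtain i where i: "i < d" "x = b' ! i" using lb' by (metis in_set_conv_nth)
      have PS: "S \<le> P * S" using P1 S1 by simp
      consider "i \<in> Z" | "i \<in> Y" | "i \<in> W" using i cov by auto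
      then show "\<bar>x\<bar> \<le> P * S"
      proof cases
        case 1
        have "0 < cZ i" "cZ i \<le> S" using cZ[OF 1] cZS[OF 1] by auto
        then have "\<bar>x\<bar> \<le> S" using b'Z[OF 1] i by simp
        then show ?thesis using PS by linarith
      next
        case 2
        have "0 \<le> b ! i mod M" "b ! i mod M < M" using M0 by auto
        then show ?thesis using b'Y[OF 2] i N2 M_def by (simp add: bY_def)
      next
        case 3
        have "0 < cW i" "cW i \<le> S" using cW[OF 3] cWS[OF 3] by auto
        then have "\<bar>x\<bar> \<le> S" using b'W[OF 3] i by simp
        then show ?thesis using PS by linarith
      qed
    qed
  qed
  show ?thesis using lb' sol nb pS unfolding S_def P_def by (intro exI[of _ b']) auto
qed

end
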